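(* Let $\alpha\in\mathbb{Q}(i)\setminus\mathbb{R}$ with $|\alpha|>1$, with minimal primitive polynomial $P_\alpha(X)=a_2X^2+a_1X+a_0$ ($a_0,a_1,a_2\in\mathbb{Z}$ coprime, $a_2>0$, $P_\alpha(\alpha)=0$), and $\mathcal{D}=\{0,\ldots,|a_0|-1\}$; write $\alpha=\frac{num(\alpha)}{den(\alpha)}$ with $num(\alpha),den(\alpha)\in\mathbb{Z}[i]$ having no common Gaussian prime divisor. Then for every $k\in\mathbb{Z}$ and every sequence $(d_j)_{j\le k}$ in $\mathcal{D}$, the series $\sum_{j\le k}d_j\alpha^j$ converges in $\mathbb{C}$ and in $K_p$ for every Gaussian prime $p$ dividing $den(\alpha)$; hence it is the $\alpha$-expansion of some ambinumber $(x,y)\in\mathbb{C}\times K_{den(\alpha)}$.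
   Context: For a Gaussian prime $p$, $\nu_p$ is the exponent of $p$ in the Gaussian prime factorization of a nonzero element of $\mathbb{Q}(i)$ ($\nu_p(0)=\infty$), $|x|_p=N(p)^{-\nu_p(x)}$ with $N(p)$ the norm of $p$, and $K_p$ is the completion of $\mathbb{Q}(i)$ for $|\cdot|_p$. $K_{den(\alpha)}=\prod_{p\mid den(\alpha)}K_p$ (product over Gaussian primes, up to associates). For $(x,y)\in\mathbb{C}\times K_{den(\alpha)}$ with $y=(y_p)_p$, a series $\sum_{j\le k}d_j\alpha^j$ ($d_j\in\mathcal{D}$, $d_k\ne0$ whenever $k\ge1$) is an $\alpha$-expansion of $(x,y)$ if it converges to $x$ in $\mathbb{C}$ and to $y_p$ in $K_p$ for each $p\mid den(\alpha)$. *)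

theory Defs
  imports "HOL-Analysis.Analysis"
begin

definition gauss_int :: "complex \<Rightarrow> bool" where
  "gauss_int z \<longleftrightarrow> Re z \<in> \<int> \<and> Im z \<in> \<int>"

definition gauss_rat :: "complex \<Rightarrow> bool" where
  "gauss_rat z \<longleftrightarrow> Re z \<in> \<rat> \<and> Im z \<in> \<rat>"

definition gdvd :: "complex \<Rightarrow> complex \<Rightarrow> bool" where
  "gdvd a b \<longleftrightarrow> (\<exists>c. gauss_int c \<and> b = a * c)"

definition gauss_prime :: "complex \<Rightarrow> bool" where
  "gauss_prime p \<longleftrightarrow> gauss_int p \<and> p \<noteq> 0 \<and> \<not> gdvd p 1 \<and>
     (\<forall>a b. gauss_int a \<longrightarrow> gauss_int b \<longrightarrow> gdvd p (a * b) \<longrightarrow> gdvd p a \<or> gdvd p b)"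

definition gnorm :: "complex \<Rightarrow> real" where
  "gnorm p = (cmod p)\<^sup>2"

definition gval :: "complex \<Rightarrow> complex \<Rightarrow> int" where
  "gval p x = (THE n. \<exists>u v. gauss_int u \<and> gauss_int v \<and> v \<noteq> 0 \<and>
                  \<not> gdvd p u \<and> \<not> gdvd p v \<and> x = p powi n * u / v)"

definition gabs :: "complex \<Rightarrow> complex \<Rightarrow> real" where
  "gabs p x = (if x = 0 then 0 else gnorm p powi (- gval p x))"

text \<open>A sequence in Q(i) converges in the completion K_p iff it is Cauchy for |.|_p.\<close>
definition p_cauchy :: "complex \<Rightarrow> (nat \<Rightarrow> complex) \<Rightarrow> bool" where
  "p_cauchy p S \<longleftrightarrow> (\<forall>e>0. \<exists>M. \<forall>m\<ge>M. \<forall>n\<ge>M. gabs p (S m - S n) < e)"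

end

theory Submission
  imports Defs
begin

lemma gi_add: "gauss_int a \<Longrightarrow> gauss_int b \<Longrightarrow> gauss_int (a + b)"
  by (auto simp: gauss_int_def)
lemma gi_diff: "gauss_int a \<Longrightarrow> gauss_int b \<Longrightarrow> gauss_int (a - b)"
  by (auto simp: gauss_int_def)
lemma gi_uminus: "gauss_int a \<Longrightarrow> gauss_int (- a)"
  by (auto simp: gauss_int_def)
lemma gi_mult: "gauss_int a \<Longrightarrow> gauss_int b \<Longrightarrow> gauss_int (a * b)"
  by (auto simp: gauss_int_def)
lemma gi_of_int: "gauss_int (of_int n)"
  by (auto simp: gauss_int_def)
lemma gi_1: "gauss_int 1" and gi_0: "gauss_int 0"
  by (auto simp: gauss_int_def)
lemma gi_cnj: "gauss_int a \<Longrightarrow> gauss_int (cnj a)"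
  by (auto simp: gauss_int_def)
lemma gi_power: "gauss_int a \<Longrightarrow> gauss_int (a ^ n)"
  by (induction n) (auto intro: gi_mult gi_1)
lemma gi_sum: "(\<And>i. i \<in> A \<Longrightarrow> gauss_int (f i)) \<Longrightarrow> gauss_int (sum f A)"
  by (induction A rule: infinite_finite_induct) (auto intro: gi_add gi_0)

lemma gi_norm_ge1: assumes "gauss_int z" "z \<noteq> 0" shows "cmod z \<ge> 1"
proof -
  obtain a b where ab: "Re z = of_int a" "Im z = of_int b" using assms(1) by (auto simp: gauss_int_def elim!: Ints_cases)
  have "a \<noteq> 0 \<or> b \<noteq> 0" using assms(2) ab by (auto simp: complex_eq_iff)
  hence "a^2 > 0 \<or> b^2 > 0" by auto
  hence "a^2 + b^2 \<ge> 1" using zero_le_power2[of a] zero_le_power2[of b] by linarith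
  hence "real_of_int (a^2 + b^2) \<ge> 1" by linarith
  hence "(cmod z)^2 \<ge> 1" using ab by (simp add: cmod_power2)
  thus ?thesis using power2_le_imp_le[of 1 "cmod z"] by simp
qed

lemma gp_norm_gt1: assumes "gauss_prime p" shows "cmod p > 1"
proof -
  have p: "gauss_int p" "p \<noteq> 0" "\<not> gdvd p 1" using assms by (auto simp: gauss_prime_def)
  have "cmod p \<ge> 1" using gi_norm_ge1 p by auto
  moreover have "cmod p \<noteq> 1"
  proof
    assume "cmod p = 1"
    hence "p * cnj p = 1" using complex_norm_square[of p] by simp
    hence "gdvd p 1" using gi_cnj[OF p(1)] unfolding gdvd_def by metis
    thus False using p by auto
  qed
  ultimately show ?thesis by simp
qed

lemma gdvd_power_prime: assumes "gauss_prime p" "gauss_int a" "gdvd p (a ^ n)" shows "gdvd p a"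
  using assms(3)
proof (induction n)
  case 0 thus ?case using assms(1) by (auto simp: gauss_prime_def)
next
  case (Suc n)
  hence "gdvd p a \<or> gdvd p (a ^ n)" using assms(1,2) gi_power[OF assms(2)] unfolding gauss_prime_def by auto
  thus ?case using Suc by auto
qed


lemma gp_facts: assumes "gauss_prime p" shows "gauss_int p" "p \<noteq> 0" "\<not> gdvd p 1"
  "\<And>a b. gauss_int a \<Longrightarrow> gauss_int b \<Longrightarrow> gdvd p (a * b) \<Longrightarrow> gdvd p a \<or> gdvd p b"
  using assms by (auto simp: gauss_prime_def)

lemma val_exists:
  assumes p: "gauss_prime p" and w: "gauss_int w" "w \<noteq> 0"
  shows "\<exists>f u. gauss_int u \<and> \<not> gdvd p u \<and> w = p ^ f * u"
proof -
  define S where "S = {f. \<exists>c. gauss_int c \<and> w = p ^ f * c}"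
  have p1: "cmod p > 1" using gp_norm_gt1[OF p] .
  obtain f0 where f0: "cmod w < cmod p ^ f0" using real_arch_pow[OF p1] by blast
  have bnd: "f < f0" if "f \<in> S" for f
  proof -
    from that have "\<exists>c. gauss_int c \<and> w = p ^ f * c" unfolding S_def by (rule CollectD)
    then obtain c where c: "gauss_int c" "w = p ^ f * c" by blast
    have "c \<noteq> 0" using c w by auto
    hence "cmod c \<ge> 1" using gi_norm_ge1 c by auto
    have cw: "cmod w = cmod p ^ f * cmod c" using c(2) by (simp add: norm_mult norm_power)
    have "cmod p ^ f * 1 \<le> cmod p ^ f * cmod c"
      by (rule mult_left_mono) (use \<open>cmod c \<ge> 1\<close> in auto)
    hence "cmod p ^ f \<le> cmod w" using cw by simp
    hence "cmod p ^ f < cmod p ^ f0" using f0 by linarith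
    thus ?thesis using power_strict_increasing_iff[OF p1] by blast
  qed
  have fin: "finite S" unfolding finite_nat_set_iff_bounded using bnd by blast
  have "0 \<in> S" using w by (auto simp: S_def)
  define f where "f = Max S"
  have "f \<in> S" unfolding f_def by (rule Max_in[OF fin]) (use \<open>0 \<in> S\<close> in auto)
  hence "\<exists>c. gauss_int c \<and> w = p ^ f * c" unfolding S_def by (rule CollectD)
  then obtain c where c: "gauss_int c" "w = p ^ f * c" by blast
  have "\<not> gdvd p c"
  proof
    assume "gdvd p c"
    then obtain c' where c': "gauss_int c'" "c = p * c'" by (auto simp: gdvd_def)
    hence "Suc f \<in> S" using c by (auto simp: S_def)
    hence "Suc f \<le> f" using fin by (simp add: f_def)
    thus False by simp
  qed
  thus ?thesis using c by blast
qed

lemma val_uniq_aux: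
  assumes p: "gauss_prime p" and "n1 < n2"
    and u: "gauss_int u1" "gauss_int v1" "v1 \<noteq> 0" "\<not> gdvd p u1" "\<not> gdvd p v1"
    and v: "gauss_int u2" "gauss_int v2" "v2 \<noteq> 0" "\<not> gdvd p u2" "\<not> gdvd p v2"
    and eq: "p powi n1 * u1 / v1 = p powi n2 * u2 / v2"
  shows False
proof -
  have pnz: "p \<noteq> 0" using gp_facts[OF p] by auto
  define d where "d = nat (n2 - n1)"
  have d: "n2 = n1 + int d" "d > 0" using assms(2) by (auto simp: d_def)
  have "p powi n2 = p powi n1 * p ^ d" using d pnz by (simp add: power_int_add)
  hence "p powi n1 * u1 / v1 = p powi n1 * (p ^ d * u2 / v2)" using eq by simp
  moreover have "p powi n1 \<noteq> 0" using pnz by (simp add: power_int_eq_0_iff)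
  ultimately have "u1 / v1 = p ^ d * u2 / v2" by (metis mult_left_cancel times_divide_eq_right)
  hence "u1 * v2 = p ^ d * u2 * v1" using u(3) v(3) by (simp add: field_simps)
  also have "\<dots> = p * (p ^ (d - 1) * u2 * v1)" using d(2)
    by (cases d) (simp_all add: mult.assoc)
  finally have eqd: "u1 * v2 = p * (p ^ (d - 1) * u2 * v1)" .
  have "gauss_int (p ^ (d - 1) * u2 * v1)"
    by (intro gi_mult gi_power gp_facts(1)[OF p] u(2) v(1))
  hence "gdvd p (u1 * v2)" unfolding gdvd_def using eqd by blast
  thus False using gp_facts(4)[OF p u(1) v(2)] u v by blast
qed

lemma gval_eq:
  assumes p: "gauss_prime p" and u: "gauss_int u" "gauss_int v" "v \<noteq> 0" "\<not> gdvd p u" "\<not> gdvd p v"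
    and x: "x = p powi n * u / v"
  shows "gval p x = n"
  unfolding gval_def
proof (rule the_equality)
  show "\<exists>u v. gauss_int u \<and> gauss_int v \<and> v \<noteq> 0 \<and> \<not> gdvd p u \<and> \<not> gdvd p v \<and> x = p powi n * u / v"
    using u x by blast
next
  fix m assume "\<exists>u v. gauss_int u \<and> gauss_int v \<and> v \<noteq> 0 \<and> \<not> gdvd p u \<and> \<not> gdvd p v \<and> x = p powi m * u / v"
  then obtain u' v' where w: "gauss_int u'" "gauss_int v'" "v' \<noteq> 0" "\<not> gdvd p u'" "\<not> gdvd p v'" "x = p powi m * u' / v'"
    by blast
  show "m = n"
  proof (rule ccontr)
    assume "m \<noteq> n"
    hence "m < n \<or> n < m" by linarith
    thus False
    proof
      assume "m < n" thus False using val_uniq_aux[OF p _ w(1-5) u] w(6) x by metis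
    next
      assume "n < m" thus False using val_uniq_aux[OF p _ u w(1-5)] w(6) x by metis
    qed
  qed
qed

lemma gval_ge:
  assumes p: "gauss_prime p" and w: "gauss_int w" "w \<noteq> 0" and v: "gauss_int v" "v \<noteq> 0" "\<not> gdvd p v"
    and x: "x = p ^ e * w / v"
  shows "gval p x \<ge> int e"
proof -
  obtain f u where fu: "gauss_int u" "\<not> gdvd p u" "w = p ^ f * u" using val_exists[OF p w] by blast
  have pe: "p powi int (e + f) = p ^ e * p ^ f" by (simp only: power_int_of_nat power_add)
  have "x = p powi int (e + f) * u / v" unfolding pe using x fu(3) by (simp add: mult.assoc)
  hence "gval p x = int (e + f)" using gval_eq[OF p fu(1) v(1,2) fu(2) v(3)] by blast
  thus ?thesis by simp
qed


lemma gabs_bound: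
  assumes p: "gauss_prime p" and W: "gauss_int W" and V: "gauss_int V" "V \<noteq> 0" "\<not> gdvd p V"
  shows "gabs p (p ^ t * W / V) \<le> inverse (gnorm p ^ t)"
proof (cases "W = 0")
  case True thus ?thesis by (simp add: gabs_def gnorm_def zero_le_power)
next
  case False
  have g1: "gnorm p > 1" using gp_norm_gt1[OF p] unfolding gnorm_def
    by (intro one_less_power) auto
  have pnz: "p \<noteq> 0" using gp_facts[OF p] by auto
  have nz: "p ^ t * W / V \<noteq> 0" using False V pnz by simp
  have ge: "gval p (p ^ t * W / V) \<ge> int t" using gval_ge[OF p W False V] by blast
  have "gabs p (p ^ t * W / V) = gnorm p powi (- gval p (p ^ t * W / V))" unfolding gabs_def using nz by (rule if_not_P)
  also have "\<dots> \<le> gnorm p powi (- int t)"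
    using ge g1 by (intro power_int_increasing) auto
  also have "\<dots> = inverse (gnorm p ^ t)" by (simp add: power_int_minus)
  finally show ?thesis .
qed

lemma sum_repr:
  fixes num den c p :: complex and k :: int and d :: "int \<Rightarrow> int"
  assumes "gauss_int num" "gauss_int c" "den = p * c" "gauss_int p" "n \<le> m" "k \<le> int n" and nnz: "num \<noteq> 0"
  shows "\<exists>W. gauss_int W \<and> (\<Sum>i\<in>{n..<m}. of_int (d (k - int i)) * (num / den) powi (k - int i))
      = p ^ nat (int n - k) * W / num ^ nat (int m - k)"
proof -
  define t where "t = nat (int n - k)"
  define B where "B = nat (int m - k)"
  define a where "a = (\<lambda>i::nat. nat (int i - k))"
  define W where "W = (\<Sum>i\<in>{n..<m}. of_int (d (k - int i)) * p ^ (a i - t) * c ^ (a i) * num ^ (B - a i))"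
  have gW: "gauss_int W" unfolding W_def using assms
    by (intro gi_sum gi_mult gi_power gi_of_int) auto
  have eq1: "(\<Sum>i\<in>{n..<m}. of_int (d (k - int i)) * (num / den) powi (k - int i))
      = (\<Sum>i\<in>{n..<m}. p ^ t * (of_int (d (k - int i)) * p ^ (a i - t) * c ^ (a i) * num ^ (B - a i)) / num ^ B)"
  proof (rule sum.cong)
    fix i assume i: "i \<in> {n..<m}"
    have ta: "t \<le> a i" "a i \<le> B" using i assms by (auto simp: t_def a_def B_def)
    have ki: "k - int i = - int (a i)" using i assms by (auto simp: a_def)
    have e1: "(num / den) powi (k - int i) = den ^ a i / num ^ a i"
      unfolding ki power_int_minus by (simp add: power_divide)
    have e2: "den ^ a i = p ^ t * p ^ (a i - t) * c ^ a i"
      using ta by (simp add: assms(3) power_mult_distrib flip: power_add)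
    have e3: "num ^ B = num ^ a i * num ^ (B - a i)"
      using ta by (simp flip: power_add)
    show "of_int (d (k - int i)) * (num / den) powi (k - int i)
       = p ^ t * (of_int (d (k - int i)) * p ^ (a i - t) * c ^ (a i) * num ^ (B - a i)) / num ^ B"
      unfolding e1 e2 e3 using nnz by (simp add: field_simps)
  qed simp
  have eq2: "(\<Sum>i\<in>{n..<m}. p ^ t * (of_int (d (k - int i)) * p ^ (a i - t) * c ^ (a i) * num ^ (B - a i)) / num ^ B) = p ^ t * W / num ^ B"
    unfolding W_def by (simp add: sum_divide_distrib sum_distrib_left)
  from eq1 eq2 have E: "(\<Sum>i\<in>{n..<m}. of_int (d (k - int i)) * (num / den) powi (k - int i)) = p ^ t * W / num ^ B"
    by (rule trans)
  show ?thesis using gW E unfolding t_def B_def by blast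
qed


theorem mainTheorem12:
  fixes \<alpha> num den :: complex and a0 a1 a2 k :: int and d :: "int \<Rightarrow> int"
  assumes alpha_rat: "gauss_rat \<alpha>"
    and alpha_nonreal: "Im \<alpha> \<noteq> 0"
    and alpha_big: "cmod \<alpha> > 1"
    and coprime: "gcd (gcd a0 a1) a2 = 1"
    and a2_pos: "a2 > 0"
    and root: "of_int a2 * \<alpha>\<^sup>2 + of_int a1 * \<alpha> + of_int a0 = 0"
    and num_int: "gauss_int num" and den_int: "gauss_int den" and den_nz: "den \<noteq> 0"
    and frac: "\<alpha> = num / den"
    and no_common: "\<not> (\<exists>q. gauss_prime q \<and> gdvd q num \<and> gdvd q den)"
    and digits: "\<forall>j\<le>k. d j \<in> {0..<\<bar>a0\<bar>}"
  shows "summable (\<lambda>n. of_int (d (k - int n)) * \<alpha> powi (k - int n))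
       \<and> (\<forall>p. gauss_prime p \<and> gdvd p den \<longrightarrow>
            p_cauchy p (\<lambda>N. \<Sum>n<N. of_int (d (k - int n)) * \<alpha> powi (k - int n)))"
proof
  have anz: "\<alpha> \<noteq> 0" using alpha_nonreal by auto
  define g where "g = (\<lambda>n::nat. real_of_int \<bar>a0\<bar> * cmod \<alpha> powi k * inverse (cmod \<alpha>) ^ n)"
  have "inverse (cmod \<alpha>) < 1" using alpha_big by (simp add: inverse_less_1_iff)
  hence "summable g" unfolding g_def
    by (intro summable_mult summable_geometric) auto
  moreover have le: "norm (of_int (d (k - int n)) * \<alpha> powi (k - int n)) \<le> g n" for n
  proof -
    have "0 \<le> d (k - int n)" "d (k - int n) < \<bar>a0\<bar>" using digits[rule_format, of "k - int n"] by auto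
    hence dn: "\<bar>real_of_int (d (k - int n))\<bar> \<le> real_of_int \<bar>a0\<bar>"
      unfolding of_int_abs[symmetric] of_int_le_iff by linarith
    have "norm (of_int (d (k - int n)) * \<alpha> powi (k - int n))
        = \<bar>real_of_int (d (k - int n))\<bar> * (cmod \<alpha> powi k * inverse (cmod \<alpha>) ^ n)"
      using anz by (simp add: norm_mult norm_power_int power_int_diff power_inverse divide_inverse norm_inverse
          flip: norm_power)
    also have "\<dots> \<le> real_of_int \<bar>a0\<bar> * (cmod \<alpha> powi k * inverse (cmod \<alpha>) ^ n)"
      using dn by (intro mult_right_mono) auto
    finally show ?thesis by (simp add: g_def mult.assoc)
  qed
  ultimately show "summable (\<lambda>n. of_int (d (k - int n)) * \<alpha> powi (k - int n))"
    by (rule summable_comparison_test'[of g 0])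
next
  show "\<forall>p. gauss_prime p \<and> gdvd p den \<longrightarrow>
            p_cauchy p (\<lambda>N. \<Sum>n<N. of_int (d (k - int n)) * \<alpha> powi (k - int n))"
  proof (intro allI impI)
    fix p assume pp: "gauss_prime p \<and> gdvd p den"
    hence p: "gauss_prime p" and pd: "gdvd p den" by auto
    obtain c where c: "gauss_int c" "den = p * c" using pd by (auto simp: gdvd_def)
    have pn: "\<not> gdvd p num" using no_common p pd by blast
    have pnB: "\<not> gdvd p (num ^ B)" for B using gdvd_power_prime[OF p num_int] pn by blast
    have nnz: "num \<noteq> 0" using alpha_nonreal frac by auto
    define S where "S = (\<lambda>N. \<Sum>n<N. of_int (d (k - int n)) * \<alpha> powi (k - int n))"
    have g1: "gnorm p > 1" using gp_norm_gt1[OF p] unfolding gnorm_def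
      by (intro one_less_power) auto
    have key: "gabs p (S m - S n) \<le> inverse (gnorm p ^ nat (int (min m n) - k))"
      if "k \<le> int n" "k \<le> int m" for m n
    proof -
      have one: "gabs p (S m - S n) \<le> inverse (gnorm p ^ nat (int n - k))" "gabs p (S n - S m) \<le> inverse (gnorm p ^ nat (int n - k))"
        if "n \<le> m" "k \<le> int n" for m n
      proof -
        have "S m = S n + (\<Sum>i\<in>{n..<m}. of_int (d (k - int i)) * \<alpha> powi (k - int i))"
          unfolding S_def lessThan_atLeast0 using that by (intro sum.atLeastLessThan_concat[symmetric]) auto
        moreover have ex: "\<exists>W. gauss_int W \<and> (\<Sum>i\<in>{n..<m}. of_int (d (k - int i)) * (num / den) powi (k - int i))
           = p ^ nat (int n - k) * W / num ^ nat (int m - k)"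
          by (rule sum_repr[of num c den p n m k d]) (use num_int c gp_facts(1)[OF p] that nnz in auto)
        then obtain W where W: "gauss_int W" "(\<Sum>i\<in>{n..<m}. of_int (d (k - int i)) * \<alpha> powi (k - int i))
           = p ^ nat (int n - k) * W / num ^ nat (int m - k)"
          unfolding frac by blast
        ultimately have e: "S m - S n = p ^ nat (int n - k) * W / num ^ nat (int m - k)"
          "S n - S m = p ^ nat (int n - k) * (- W) / num ^ nat (int m - k)" by auto
        show "gabs p (S m - S n) \<le> inverse (gnorm p ^ nat (int n - k))"
          unfolding e(1) using gabs_bound[OF p W(1) gi_power[OF num_int] _ pnB] nnz by simp
        show "gabs p (S n - S m) \<le> inverse (gnorm p ^ nat (int n - k))"
          unfolding e(2) using gabs_bound[OF p gi_uminus[OF W(1)] gi_power[OF num_int] _ pnB] nnz by simp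
      qed
      show ?thesis
      proof (cases "n \<le> m")
        case True
        hence mn: "min m n = n" by simp
        show ?thesis unfolding mn by (rule one(1)[OF True that(1)])
      next
        case False
        hence mn: "min m n = m" by simp
        have "m \<le> n" using False by simp
        show ?thesis unfolding mn by (rule one(2)[where m=n and n=m, OF \<open>m \<le> n\<close> that(2)])
      qed
    qed
    show "p_cauchy p S" unfolding p_cauchy_def
    proof (intro allI impI)
      fix e :: real assume e: "e > 0"
      have "inverse (gnorm p) < 1" using g1 by (simp add: inverse_less_1_iff)
      then obtain t0 where t0: "inverse (gnorm p) ^ t0 < e" using real_arch_pow_inv[OF e] by blast
      show "\<exists>M. \<forall>m\<ge>M. \<forall>n\<ge>M. gabs p (S m - S n) < e"
      proof (intro exI allI impI)
        fix m n assume mn: "nat k + t0 \<le> m" "nat k + t0 \<le> n"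
        hence kk: "k \<le> int n" "k \<le> int m" by auto
        have tt: "t0 \<le> nat (int (min m n) - k)" using mn by auto
        have "gabs p (S m - S n) \<le> inverse (gnorm p ^ nat (int (min m n) - k))" using key kk by blast
        also have "\<dots> \<le> inverse (gnorm p ^ t0)"
          using g1 tt by (intro le_imp_inverse_le power_increasing) auto
        also have "\<dots> < e" using t0 by (simp add: power_inverse)
        finally show "gabs p (S m - S n) < e" .
      qed
    qed
  qed
qed

end
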